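(* Let $\mathcal{T}$ be a tangle of order $k$ in a connectivity system $(E,\lambda)$, and let $X$ be a $\mathcal{T}$-strong $k$-separating set in $\lambda$. If $(X_i)_{i=1}^m$ is a partial $k$-sequence for $X$, then $X\cup \bigcup_{i=1}^m X_i\subseteq \mathrm{fcl}_{\mathcal{T}}(X)$.
   Context: A connectivity system is a pair $(E,\lambda)$ with $E$ finite and $\lambda$ an integer-valued symmetric submodular function on subsets of $E$. $X$ is $k$-separating if $\lambda(X)\le k$. A tangle of order $k$ is a collection $\mathcal T$ of subsets of $E$ with (T1) $\lambda(A)<k$ for $A\in\mathcal T$; (T2) if $\lambda(A)\le k-1$ then $A\in\mathcal T$ or $E-A\in\mathcal T$; (T3) $A\cup B\cup C\ne E$ for $A,B,C\in\mathcal T$; (T4) $E-\{e\}\notin\mathcal T$ for $e\in E$. A set is $\mathcal T$-weak if contained in a member of $\mathcal T$, and $\mathcal T$-strong otherwise. A $\mathcal T$-strong $k$-separating set $X$ is fully closed if $X\cup Y$ is not $k$-separating for every nonempty $\mathcal T$-weak $Y\subseteq E-X$. For a $\mathcal T$-strong $k$-separating $X$, $\mathrm{fcl}_{\mathcal T}(X)$ is the intersection of all fully closed $k$-separating sets containing $X$. A partial $k$-sequence for $X$ is a sequence $(X_i)_{i=1}^m$ of pairwise disjoint nonempty $\mathcal T$-weak subsets of $E-X$ such that $X\cup\bigcup_{i=1}^jX_i$ is $k$-separating for all $j\in\{1,\dots,m\}$. *)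

theory Defs
  imports Main
begin

definition connectivity_system :: "'a set \<Rightarrow> ('a set \<Rightarrow> int) \<Rightarrow> bool" where
  "connectivity_system E lam \<longleftrightarrow> finite E \<and>
     (\<forall>X. X \<subseteq> E \<longrightarrow> lam X = lam (E - X)) \<and>
     (\<forall>X Y. X \<subseteq> E \<longrightarrow> Y \<subseteq> E \<longrightarrow> lam X + lam Y \<ge> lam (X \<union> Y) + lam (X \<inter> Y))"

definition k_separating :: "('a set \<Rightarrow> int) \<Rightarrow> int \<Rightarrow> 'a set \<Rightarrow> bool" where
  "k_separating lam k X \<longleftrightarrow> lam X \<le> k"

definition tangle :: "'a set \<Rightarrow> ('a set \<Rightarrow> int) \<Rightarrow> int \<Rightarrow> 'a set set \<Rightarrow> bool" where
  "tangle E lam k T \<longleftrightarrow>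
     (\<forall>A\<in>T. A \<subseteq> E) \<and>
     (\<forall>A\<in>T. lam A < k) \<and>
     (\<forall>A. A \<subseteq> E \<longrightarrow> lam A \<le> k - 1 \<longrightarrow> A \<in> T \<or> E - A \<in> T) \<and>
     (\<forall>A\<in>T. \<forall>B\<in>T. \<forall>C\<in>T. A \<union> B \<union> C \<noteq> E) \<and>
     (\<forall>e\<in>E. E - {e} \<notin> T)"

definition T_weak :: "'a set set \<Rightarrow> 'a set \<Rightarrow> bool" where
  "T_weak T Y \<longleftrightarrow> (\<exists>A\<in>T. Y \<subseteq> A)"

definition T_strong :: "'a set set \<Rightarrow> 'a set \<Rightarrow> bool" where
  "T_strong T Y \<longleftrightarrow> \<not> T_weak T Y"

definition fully_closed :: "'a set \<Rightarrow> ('a set \<Rightarrow> int) \<Rightarrow> int \<Rightarrow> 'a set set \<Rightarrow> 'a set \<Rightarrow> bool" where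
  "fully_closed E lam k T X \<longleftrightarrow> X \<subseteq> E \<and> T_strong T X \<and> k_separating lam k X \<and>
     (\<forall>Y. Y \<subseteq> E - X \<longrightarrow> Y \<noteq> {} \<longrightarrow> T_weak T Y \<longrightarrow> \<not> k_separating lam k (X \<union> Y))"

definition fcl :: "'a set \<Rightarrow> ('a set \<Rightarrow> int) \<Rightarrow> int \<Rightarrow> 'a set set \<Rightarrow> 'a set \<Rightarrow> 'a set" where
  "fcl E lam k T X = \<Inter> {Z. fully_closed E lam k T Z \<and> X \<subseteq> Z}"

definition partial_k_sequence ::
  "'a set \<Rightarrow> ('a set \<Rightarrow> int) \<Rightarrow> int \<Rightarrow> 'a set set \<Rightarrow> 'a set \<Rightarrow> (nat \<Rightarrow> 'a set) \<Rightarrow> nat \<Rightarrow> bool" where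
  "partial_k_sequence E lam k T X Xs m \<longleftrightarrow>
     (\<forall>i\<in>{1..m}. Xs i \<subseteq> E - X \<and> Xs i \<noteq> {} \<and> T_weak T (Xs i)) \<and>
     (\<forall>i\<in>{1..m}. \<forall>j\<in>{1..m}. i \<noteq> j \<longrightarrow> Xs i \<inter> Xs j = {}) \<and>
     (\<forall>j\<in>{1..m}. k_separating lam k (X \<union> (\<Union>i\<in>{1..j}. Xs i)))"

end

theory Submission
  imports Defs
begin

lemma key:
  assumes cs: "connectivity_system E lam"
    and tg: "tangle E lam k T"
    and fc: "fully_closed E lam k T Z"
    and SE: "S \<subseteq> E"
    and st: "T_strong T (S \<inter> Z)"
    and ls: "lam S \<le> k"
    and ne: "S - Z \<noteq> {}"
    and wk: "T_weak T (S - Z)"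
  shows False
proof -
  have ZE: "Z \<subseteq> E" and lz: "lam Z \<le> k"
    and cl: "\<And>Y. Y \<subseteq> E - Z \<Longrightarrow> Y \<noteq> {} \<Longrightarrow> T_weak T Y \<Longrightarrow> \<not> lam (Z \<union> Y) \<le> k"
    using fc unfolding fully_closed_def k_separating_def by blast+
  have sym: "\<And>A. A \<subseteq> E \<Longrightarrow> lam A = lam (E - A)"
    and sub: "\<And>A B. A \<subseteq> E \<Longrightarrow> B \<subseteq> E \<Longrightarrow> lam A + lam B \<ge> lam (A \<union> B) + lam (A \<inter> B)"
    using cs unfolding connectivity_system_def by blast+
  have "lam Z + lam (E - Z) \<ge> lam (Z \<union> (E - Z)) + lam (Z \<inter> (E - Z))" using sub[of Z "E - Z"] ZE by auto
  moreover have "Z \<union> (E - Z) = E" "Z \<inter> (E - Z) = {}" using ZE by auto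
  moreover have "lam E = lam {}" using sym[of E] by simp
  moreover have "lam (E - Z) = lam Z" using sym[OF ZE] by simp
  ultimately have lE: "lam E \<le> k" using lz by simp
  have lU: "lam (S \<inter> Z) \<ge> k"
  proof (rule ccontr)
    assume "\<not> lam (S \<inter> Z) \<ge> k"
    hence "lam (S \<inter> Z) \<le> k - 1" by simp
    moreover have "S \<inter> Z \<subseteq> E" using SE by auto
    moreover have "\<forall>A. A \<subseteq> E \<longrightarrow> lam A \<le> k - 1 \<longrightarrow> A \<in> T \<or> E - A \<in> T" using tg unfolding tangle_def by simp
    ultimately have "S \<inter> Z \<in> T \<or> E - (S \<inter> Z) \<in> T" by simp
    moreover have "S \<inter> Z \<notin> T" using st unfolding T_strong_def T_weak_def by blast
    ultimately have "E - (S \<inter> Z) \<in> T" by blast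
    moreover have "E - Z \<subseteq> E - (S \<inter> Z)" by blast
    ultimately have "T_weak T (E - Z)" unfolding T_weak_def by (rule bexI[rotated])
    moreover have "E - Z \<noteq> {}" using ne SE by auto
    ultimately have "\<not> lam (Z \<union> (E - Z)) \<le> k" using cl[of "E - Z"] by simp
    moreover have "Z \<union> (E - Z) = E" using ZE by auto
    ultimately show False using lE by simp
  qed
  have "lam Z + lam S \<ge> lam (Z \<union> S) + lam (Z \<inter> S)" using sub[OF ZE SE] .
  moreover have "Z \<inter> S = S \<inter> Z" by auto
  ultimately have l1: "lam (Z \<union> S) \<le> k" using lU lz ls by simp
  have e1: "Z \<union> (S - Z) = Z \<union> S" by auto
  have "S - Z \<subseteq> E - Z" using SE by auto
  hence "\<not> lam (Z \<union> (S - Z)) \<le> k" using cl ne wk by blast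
  thus False using l1 unfolding e1 by simp
qed

theorem lemma3p4:
  fixes E :: "'a set" and lam :: "'a set \<Rightarrow> int" and k :: int
    and T :: "'a set set" and X :: "'a set" and Xs :: "nat \<Rightarrow> 'a set" and m :: nat
  assumes "connectivity_system E lam"
    and "tangle E lam k T"
    and "X \<subseteq> E"
    and "T_strong T X"
    and "k_separating lam k X"
    and "partial_k_sequence E lam k T X Xs m"
  shows "X \<union> (\<Union>i\<in>{1..m}. Xs i) \<subseteq> fcl E lam k T X"
proof -
  have pk1: "\<And>i. i \<in> {1..m} \<Longrightarrow> Xs i \<subseteq> E - X \<and> Xs i \<noteq> {} \<and> T_weak T (Xs i)"
    and pk3: "\<And>j. j \<in> {1..m} \<Longrightarrow> lam (X \<union> (\<Union>i\<in>{1..j}. Xs i)) \<le> k"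
    using assms(6) unfolding partial_k_sequence_def k_separating_def by blast+
  have main: "X \<union> (\<Union>i\<in>{1..m}. Xs i) \<subseteq> Z" if fc: "fully_closed E lam k T Z" and XZ: "X \<subseteq> Z" for Z
  proof -
    have "j \<le> m \<Longrightarrow> X \<union> (\<Union>i\<in>{1..j}. Xs i) \<subseteq> Z" for j
    proof (induction j)
      case 0
      then show ?case using XZ by simp
    next
      case (Suc j)
      hence IH: "X \<union> (\<Union>i\<in>{1..j}. Xs i) \<subseteq> Z" by simp
      have jm: "Suc j \<in> {1..m}" using Suc.prems by simp
      define S where "S = X \<union> (\<Union>i\<in>{1..Suc j}. Xs i)"
      have Seq: "S = (X \<union> (\<Union>i\<in>{1..j}. Xs i)) \<union> Xs (Suc j)"
      proof -
        have "{1..Suc j} = insert (Suc j) {1..j}" by auto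
        thus ?thesis unfolding S_def by auto
      qed
      show ?case
      proof (rule ccontr)
        assume nz: "\<not> X \<union> (\<Union>i\<in>{1..Suc j}. Xs i) \<subseteq> Z"
        have SZ: "S - Z \<subseteq> Xs (Suc j)" using IH Seq by auto
        have ne: "S - Z \<noteq> {}" using nz unfolding S_def by blast
        have wk: "T_weak T (S - Z)" using pk1[OF jm] SZ unfolding T_weak_def by blast
        have "\<forall>i\<in>{1..Suc j}. Xs i \<subseteq> E"
        proof
          fix i assume "i \<in> {1..Suc j}"
          hence "i \<in> {1..m}" using Suc.prems by auto
          thus "Xs i \<subseteq> E" using pk1 by blast
        qed
        hence SE: "S \<subseteq> E" unfolding S_def using assms(3) by blast
        have "X \<subseteq> S \<inter> Z" using XZ unfolding S_def by blast
        hence st: "T_strong T (S \<inter> Z)" using assms(4) unfolding T_strong_def T_weak_def by blast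
        have ls: "lam S \<le> k" using pk3[OF jm] S_def by simp
        show False using key[OF assms(1,2) fc SE st ls ne wk] .
      qed
    qed
    from this[of m] show ?thesis by simp
  qed
  show ?thesis unfolding fcl_def
  proof (rule Inter_greatest)
    fix Z assume "Z \<in> {Z. fully_closed E lam k T Z \<and> X \<subseteq> Z}"
    thus "X \<union> (\<Union>i\<in>{1..m}. Xs i) \<subseteq> Z" using main by simp
  qed
qed

end
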